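(* For all integers $d\ge 2$, $g\ge 1$ and $t\ge 4$ there exist positive integers $m,n$ with $n/m\ge t$ and a simple graph $G'$ of girth at least $g$ whose vertex set is partitioned into sets $A$ and $B$ with $|A|=m$ and $|B|=n$, such that every edge of $G'$ joins a vertex of $A$ to a vertex of $B$ and every vertex of $B$ has degree at least $d$ in $G'$.
   Context: The girth of a graph is the length of its shortest cycle (infinite for a forest). *)

theory Defs
  imports Main
begin

definition simple_graph :: "'a set \<Rightarrow> 'a set set \<Rightarrow> bool" where
  "simple_graph V E \<longleftrightarrow> finite V \<and> (\<forall>e\<in>E. e \<subseteq> V \<and> card e = 2)"

definition is_cycle :: "'a set \<Rightarrow> 'a set set \<Rightarrow> 'a list \<Rightarrow> bool" where
  "is_cycle V E cs \<longleftrightarrow> length cs \<ge> 3 \<and> distinct cs \<and> set cs \<subseteq> V \<and>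
     (\<forall>i < length cs. {cs ! i, cs ! ((i + 1) mod length cs)} \<in> E)"

definition girth_at_least :: "'a set \<Rightarrow> 'a set set \<Rightarrow> nat \<Rightarrow> bool" where
  "girth_at_least V E g \<longleftrightarrow> (\<forall>cs. is_cycle V E cs \<longrightarrow> length cs \<ge> g)"

definition degree :: "'a set set \<Rightarrow> 'a \<Rightarrow> nat" where
  "degree E v = card {e \<in> E. v \<in> e}"

end

theory Submission imports Defs begin


definition tgl :: "'b set \<Rightarrow> 'b \<Rightarrow> 'b set" where
  "tgl S e = (if e \<in> S then S - {e} else insert e S)"

lemma tgl_tgl[simp]: "tgl (tgl S e) e = S"
  unfolding tgl_def by auto

lemma tgl_sub: "S \<subseteq> E \<Longrightarrow> e \<in> E \<Longrightarrow> tgl S e \<subseteq> E"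
  unfolding tgl_def by auto

definition coverE :: "'a set set \<Rightarrow> ('a \<times> 'a set set) set set" where
  "coverE E = {{(v,S),(u, tgl S {v,u})} | v u S. {v,u} \<in> E \<and> S \<subseteq> E}"

lemma cover_girth:
  assumes base: "girth_at_least V E g" and sg: "simple_graph V E"
  shows "girth_at_least (V \<times> Pow E) (coverE E) (2*g)"
  unfolding girth_at_least_def
proof (intro allI impI)
  fix cs assume cyc: "is_cycle (V \<times> Pow E) (coverE E) cs"
  define L where "L = length cs"
  have L3: "L \<ge> 3" and dist: "distinct cs"
    and edges: "\<And>i. i<L \<Longrightarrow> {cs!i, cs!((i+1) mod L)} \<in> coverE E"
    using cyc unfolding is_cycle_def L_def by auto
  define w where "w i = fst (cs ! (i mod L))" for i
  define X where "X i = snd (cs ! (i mod L))" for i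
  define ed where "ed i = {w i, w (Suc i)}" for i
  have step: "ed i \<in> E \<and> w i \<noteq> w (Suc i) \<and> X (Suc i) = tgl (X i) (ed i)" for i
  proof -
    define i' where "i' = i mod L"
    have i'L: "i' < L" using L3 unfolding i'_def by auto
    have sm: "Suc i mod L = (i'+1) mod L" unfolding i'_def by (simp add: mod_Suc_eq)
    obtain v u S where eq: "{cs!i', cs!((i'+1) mod L)} = {(v,S),(u, tgl S {v,u})}"
      and vu: "{v,u} \<in> E" and SE: "S \<subseteq> E"
      using edges[OF i'L] unfolding coverE_def by blast
    have "card {v,u} = 2" using sg vu unfolding simple_graph_def by auto
    hence vnu: "v \<noteq> u" by auto
    from eq have "(cs!i' = (v,S) \<and> cs!((i'+1) mod L) = (u, tgl S {v,u})) \<or>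
                  (cs!i' = (u, tgl S {v,u}) \<and> cs!((i'+1) mod L) = (v,S))"
      by (simp add: doubleton_eq_iff)
    thus ?thesis
    proof
      assume h: "cs!i' = (v,S) \<and> cs!((i'+1) mod L) = (u, tgl S {v,u})"
      show ?thesis using h vu vnu unfolding ed_def w_def X_def sm i'_def[symmetric] by simp
    next
      assume h: "cs!i' = (u, tgl S {v,u}) \<and> cs!((i'+1) mod L) = (v,S)"
      show ?thesis using h vu vnu unfolding ed_def w_def X_def sm i'_def[symmetric]
        by (simp add: insert_commute)
    qed
  qed
  have perw: "w (i + L) = w i" and perX: "X (i+L) = X i" for i
    unfolding w_def X_def by simp_all
  have parity: "e \<in> X (s+j) \<longleftrightarrow> (e \<in> X s \<longleftrightarrow> even (card {k. s \<le> k \<and> k < s+j \<and> ed k = e}))" for s j e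
  proof (induction j)
    case 0
    have h: "{k. s \<le> k \<and> k < s \<and> ed k = e} = {}" by auto
    show ?case by (simp only: add_0_right h card.empty even_zero) simp
  next
    case (Suc j)
    have fin: "finite {k. s \<le> k \<and> k < s+j \<and> ed k = e}" by simp
    have set: "{k. s \<le> k \<and> k < s+Suc j \<and> ed k = e} =
      {k. s \<le> k \<and> k < s+j \<and> ed k = e} \<union> (if ed (s+j) = e then {s+j} else {})"
      by (cases "ed (s+j) = e") (auto simp: less_Suc_eq simp del: insert_iff)
    show ?case
    proof (cases "ed (s+j) = e")
      case True
      have "card {k. s \<le> k \<and> k < s+Suc j \<and> ed k = e} = Suc (card {k. s \<le> k \<and> k < s+j \<and> ed k = e})"
        unfolding set using True fin by simp
      moreover have "X (s + Suc j) = tgl (X (s+j)) e" using step[of "s+j"] True by simp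
      ultimately show ?thesis using Suc.IH unfolding tgl_def by auto
    next
      case False
      have "card {k. s \<le> k \<and> k < s+Suc j \<and> ed k = e} = card {k. s \<le> k \<and> k < s+j \<and> ed k = e}"
        unfolding set using False by simp
      moreover have "X (s + Suc j) = tgl (X (s+j)) (ed (s+j))" using step[of "s+j"] by simp
      ultimately show ?thesis using Suc.IH False unfolding tgl_def by auto
    qed
  qed
  have even: "even (card {k. s \<le> k \<and> k < s+L \<and> ed k = e})" for s e
    proof -
    have "X (s+L) = X s" using perX[of s] by (simp add: add.commute)
    then show ?thesis using parity[of e s L] by blast
  qed
  have nb: "w i \<noteq> w (Suc (Suc i))" for i
  proof
    assume eq: "w i = w (Suc (Suc i))"
    have "ed (Suc i) = ed i" unfolding ed_def using eq by (simp add: insert_commute)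
    hence "X (Suc (Suc i)) = X i" using step[of i] step[of "Suc i"] by simp
    hence "cs ! (i mod L) = cs ! (Suc (Suc i) mod L)"
      using eq unfolding w_def X_def by (simp add: prod_eq_iff)
    moreover have "i mod L < length cs" "Suc (Suc i) mod L < length cs"
      using L3 unfolding L_def by (metis mod_less_divisor gr_zeroI not_numeral_le_zero)+
    ultimately have "Suc (Suc i) mod L = i mod L" using dist nth_eq_iff_index_eq by metis
    hence "L dvd Suc (Suc i) - i" using mod_eq_dvd_iff_nat[of i "Suc (Suc i)" L] by simp
    hence "L dvd 2" by simp
    hence "L \<le> 2" by (simp add: dvd_imp_le)
    thus False using L3 by simp
  qed
  define P where "P l = (0 < l \<and> (\<exists>i. w i = w (i+l)))" for l
  have PL: "P L" unfolding P_def using L3 perw[of 0] by (metis add_0 gr_zeroI not_numeral_le_zero)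
  define l where "l = (LEAST l. P l)"
  have Pl: "P l" unfolding l_def using PL by (rule LeastI)
  have lL: "l \<le> L" unfolding l_def using PL by (rule Least_le)
  have minl: "\<And>l' i. 0 < l' \<Longrightarrow> l' < l \<Longrightarrow> w i \<noteq> w (i+l')"
  proof -
    fix l' i assume "0 < l'" "l' < l"
    then have "\<not> P l'" unfolding l_def using not_less_Least by blast
    then show "w i \<noteq> w (i+l')" using \<open>0 < l'\<close> unfolding P_def by blast
  qed
  obtain i0 where i0: "w i0 = w (i0 + l)" and l0: "0 < l" using Pl unfolding P_def by auto
  have "l \<noteq> 1" using i0 step[of i0] by auto
  moreover have "l \<noteq> 2" using i0 nb[of i0] by (auto simp: numeral_2_eq_2)
  ultimately have l3: "l \<ge> 3" using l0 by linarith
  have wV: "w i \<in> V" for i using step[of i] sg unfolding simple_graph_def ed_def by auto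
  define cs0 where "cs0 = map (\<lambda>k. w (i0+k)) [0..<l]"
  have injw: "inj_on (\<lambda>k. w (i0+k)) {0..<l}"
  proof (rule inj_onI)
    fix a b assume "a \<in> {0..<l}" "b \<in> {0..<l}" and e: "w (i0+a) = w (i0+b)"
    show "a = b"
    proof (rule ccontr)
      assume "a \<noteq> b"
      then consider "a < b" | "b < a" by linarith
      thus False
      proof cases
        case 1 then show False using minl[of "b-a" "i0+a"] e \<open>b \<in> _\<close> by (auto simp: less_imp_diff_less)
      next
        case 2 then show False using minl[of "a-b" "i0+b"] e \<open>a \<in> _\<close> by (auto simp: less_imp_diff_less)
      qed
    qed
  qed
  have "is_cycle V E cs0"
    unfolding is_cycle_def
  proof (intro conjI allI impI)
    show "3 \<le> length cs0" using l3 unfolding cs0_def by simp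
    show "distinct cs0" unfolding cs0_def using injw by (simp add: distinct_map)
    show "set cs0 \<subseteq> V" unfolding cs0_def using wV by auto
    fix k assume k: "k < length cs0"
    hence kl: "k < l" unfolding cs0_def by simp
    have "cs0 ! ((k+1) mod length cs0) = w (i0 + Suc k)"
    proof (cases "k+1 < l")
      case True then show ?thesis unfolding cs0_def by simp
    next
      case False then have "k+1 = l" using kl by simp
      then show ?thesis unfolding cs0_def using i0 l0 by simp
    qed
    moreover have "cs0 ! k = w (i0+k)" unfolding cs0_def using kl by simp
    ultimately show "{cs0 ! k, cs0 ! ((k + 1) mod length cs0)} \<in> E"
      using step[of "i0+k"] unfolding ed_def by simp
  qed
  hence lg: "g \<le> l" using base unfolding girth_at_least_def cs0_def by fastforce
  have inje: "inj_on (\<lambda>k. ed (i0+k)) {0..<l}"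
  proof (rule inj_onI)
    have aux: "a < b \<Longrightarrow> b < l \<Longrightarrow> ed (i0+a) = ed (i0+b) \<Longrightarrow> False" for a b
    proof -
      assume ab: "a < b" "b < l" and e: "ed (i0+a) = ed (i0+b)"
      from e have "(w (i0+a) = w (i0+b) \<and> w (Suc (i0+a)) = w (Suc (i0+b))) \<or>
                   (w (i0+a) = w (Suc (i0+b)) \<and> w (Suc (i0+a)) = w (i0+b))"
        unfolding ed_def by (simp add: doubleton_eq_iff)
      thus False
      proof
        assume "w (i0+a) = w (i0+b) \<and> w (Suc (i0+a)) = w (Suc (i0+b))"
        then show False using minl[of "b-a" "i0+a"] ab by (auto simp: less_imp_diff_less)
      next
        assume h: "w (i0+a) = w (Suc (i0+b)) \<and> w (Suc (i0+a)) = w (i0+b)"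
        show False
        proof (cases "b = Suc a")
          case True then show False using h nb[of "i0+a"] by simp
        next
          case False then show False using h minl[of "b-a-1" "Suc (i0+a)"] ab by (auto simp: less_imp_diff_less)
        qed
      qed
    qed
    fix a b assume "a \<in> {0..<l}" "b \<in> {0..<l}" "ed (i0+a) = ed (i0+b)"
    then show "a = b" using aux[of a b] aux[of b a] by (metis atLeastLessThan_iff linorder_neqE_nat)
  qed
  have cov: "(\<lambda>k. ed (i0+k)) ` {0..<l} \<subseteq> ed ` {i0+l..<i0+L}"
  proof
    fix x assume "x \<in> (\<lambda>k. ed (i0+k)) ` {0..<l}"
    then obtain k where k: "k < l" and x: "x = ed (i0+k)" by auto
    show "x \<in> ed ` {i0+l..<i0+L}"
    proof (rule ccontr)
      assume nx: "x \<notin> ed ` {i0+l..<i0+L}"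
      have "{p. i0 \<le> p \<and> p < i0+L \<and> ed p = x} = {i0+k}"
      proof (intro equalityI subsetI)
        fix p assume p: "p \<in> {p. i0 \<le> p \<and> p < i0+L \<and> ed p = x}"
        show "p \<in> {i0+k}"
        proof (cases "p < i0 + l")
          case True
          hence "p - i0 \<in> {0..<l}" using p by auto
          moreover have "ed (i0 + (p-i0)) = ed (i0+k)" using p x by auto
          ultimately have "p - i0 = k" using inje k by (auto simp: inj_on_def)
          thus ?thesis using p by auto
        next
          case False
          then show ?thesis using p nx by auto
        qed
      next
        fix p assume "p \<in> {i0+k}"
        then show "p \<in> {p. i0 \<le> p \<and> p < i0+L \<and> ed p = x}" using k lL x by auto
      qed
      thus False using even[of i0 x] by simp
    qed
  qed
  have "l = card ((\<lambda>k. ed (i0+k)) ` {0..<l})" using inje by (simp add: card_image)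
  also have "\<dots> \<le> card (ed ` {i0+l..<i0+L})" using cov by (intro card_mono) auto
  also have "\<dots> \<le> card {i0+l..<i0+L}" by (rule card_image_le) simp
  also have "\<dots> = L - l" by simp
  finally have "2*l \<le> L" by linarith
  thus "2*g \<le> length cs" using lg unfolding L_def by linarith
qed



definition good :: "nat \<Rightarrow> nat \<Rightarrow> nat \<Rightarrow> 'a set \<Rightarrow> 'a set set \<Rightarrow> 'a set \<Rightarrow> 'a set \<Rightarrow> bool" where
 "good d t g V E A B \<longleftrightarrow> simple_graph V E \<and> girth_at_least V E g \<and> A \<union> B = V \<and> A \<inter> B = {}
   \<and> card A > 0 \<and> card B \<ge> t * card A \<and> (\<forall>e\<in>E. \<exists>a\<in>A. \<exists>b\<in>B. e = {a,b}) \<and> (\<forall>v\<in>B. degree E v \<ge> d)"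

lemma cover_good:
  assumes G: "good d t g V E A B"
  shows "good d t (2*g) (V \<times> Pow E) (coverE E) (A \<times> Pow E) (B \<times> Pow E)"
proof -
  have sg: "simple_graph V E" and gi: "girth_at_least V E g" and AB: "A \<union> B = V" "A \<inter> B = {}"
    and cA: "card A > 0" and cB: "card B \<ge> t * card A"
    and bip: "\<forall>e\<in>E. \<exists>a\<in>A. \<exists>b\<in>B. e = {a,b}" and deg: "\<forall>v\<in>B. degree E v \<ge> d"
    using G unfolding good_def by auto
  have finV: "finite V" using sg unfolding simple_graph_def by auto
  have EV: "E \<subseteq> Pow V" using sg unfolding simple_graph_def by auto
  have finE: "finite E" using finV EV by (metis finite_Pow_iff finite_subset)
  have finA: "finite A" "finite B" using finV AB by auto
  have ce: "e \<in> coverE E \<Longrightarrow> \<exists>v u S. e = {(v,S),(u, tgl S {v,u})} \<and> {v,u} \<in> E \<and> S \<subseteq> E \<and> v \<noteq> u \<and> v \<in> V \<and> u \<in> V" for e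
  proof -
    assume "e \<in> coverE E"
    then obtain v u S where e: "e = {(v,S),(u, tgl S {v,u})}" "{v,u} \<in> E" "S \<subseteq> E"
      unfolding coverE_def by blast
    moreover have c2: "card {v,u} = 2" "{v,u} \<subseteq> V" using sg e(2) unfolding simple_graph_def by auto
    moreover have "v \<noteq> u" using c2(1) by (cases "v = u") auto
    ultimately show ?thesis by blast
  qed
  have sg': "simple_graph (V \<times> Pow E) (coverE E)"
    unfolding simple_graph_def
  proof (intro conjI ballI)
    show "finite (V \<times> Pow E)" using finV finE by simp
    fix e assume "e \<in> coverE E"
    then obtain v u S where e: "e = {(v,S),(u, tgl S {v,u})}" "{v,u} \<in> E" "S \<subseteq> E" "v \<noteq> u" "v \<in> V" "u \<in> V"
      using ce by blast
    have T: "tgl S {v,u} \<subseteq> E" by (rule tgl_sub[OF e(3) e(2)])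
    show "e \<subseteq> V \<times> Pow E" unfolding e(1) using T e(3,5,6) by simp
    show "card e = 2" unfolding e(1) using e(4) by simp
  qed
  have finE': "finite (coverE E)"
  proof -
    have "coverE E \<subseteq> Pow (V \<times> Pow E)" using sg' unfolding simple_graph_def by auto
    moreover have "finite (V \<times> Pow E)" using finV finE by simp
    ultimately show ?thesis by (metis finite_Pow_iff finite_subset)
  qed
  have bip': "\<forall>e\<in>coverE E. \<exists>a\<in>A \<times> Pow E. \<exists>b\<in>B \<times> Pow E. e = {a,b}"
  proof
    fix e assume "e \<in> coverE E"
    then obtain v u S where e: "e = {(v,S),(u, tgl S {v,u})}" "{v,u} \<in> E" "S \<subseteq> E"
      using ce by blast
    have T: "tgl S {v,u} \<subseteq> E" by (rule tgl_sub[OF e(3) e(2)])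
    have "\<exists>a\<in>A. \<exists>b\<in>B. {v,u} = {a,b}" by (rule bspec[OF bip e(2)])
    then obtain a b where ab: "a \<in> A" "b \<in> B" "{v,u} = {a,b}" by blast
    show "\<exists>a\<in>A \<times> Pow E. \<exists>b\<in>B \<times> Pow E. e = {a,b}"
    proof (cases "v = a \<and> u = b")
      case True
      then have "e = {(a,S),(b, tgl S {v,u})}" using e(1) by simp
      moreover have "(a,S) \<in> A \<times> Pow E" "(b, tgl S {v,u}) \<in> B \<times> Pow E" using ab T e(3) by auto
      ultimately show ?thesis by blast
    next
      case False
      then have "v = b" "u = a" using ab(3) by (auto simp: doubleton_eq_iff)
      then have "e = {(a, tgl S {v,u}), (b,S)}" using e(1) by (simp add: insert_commute)
      moreover have "(b,S) \<in> B \<times> Pow E" "(a, tgl S {v,u}) \<in> A \<times> Pow E" using ab T e(3) by auto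
      ultimately show ?thesis by blast
    qed
  qed
  have deg': "\<forall>v\<in>B \<times> Pow E. degree (coverE E) v \<ge> d"
  proof
    fix x assume x: "x \<in> B \<times> Pow E"
    then obtain b S where xb: "x = (b,S)" "b \<in> B" "S \<subseteq> E" by auto
    have sub: "{e\<in>E. b\<in>e} \<subseteq> (\<lambda>e'. fst ` e') ` {e'\<in>coverE E. x \<in> e'}"
    proof
      fix e assume e: "e \<in> {e\<in>E. b\<in>e}"
      then have "card e = 2" using sg unfolding simple_graph_def by auto
      then obtain u where eu: "e = {b,u}" using e by (auto simp: card_2_iff)
      define e' where "e' = {(b,S),(u, tgl S {b,u})}"
      have "e' \<in> coverE E" unfolding e'_def coverE_def using e eu xb by blast
      moreover have "x \<in> e'" unfolding e'_def xb by simp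
      moreover have "fst ` e' = e" unfolding e'_def eu by simp
      ultimately show "e \<in> (\<lambda>e'. fst ` e') ` {e'\<in>coverE E. x \<in> e'}" by blast
    qed
    have "d \<le> degree E b" using deg xb by auto
    also have "\<dots> \<le> card ((\<lambda>e'. fst ` e') ` {e'\<in>coverE E. x \<in> e'})"
      unfolding degree_def using sub finE' by (intro card_mono) auto
    also have "\<dots> \<le> card {e'\<in>coverE E. x \<in> e'}" using finE' by (intro card_image_le) auto
    finally show "degree (coverE E) x \<ge> d" unfolding degree_def .
  qed
  have cA': "card (A \<times> Pow E) = card A * 2 ^ card E" using finE finA by (simp add: card_cartesian_product card_Pow)
  have cB': "card (B \<times> Pow E) = card B * 2 ^ card E" using finE finA by (simp add: card_cartesian_product card_Pow)
  show ?thesis unfolding good_def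
  proof (intro conjI)
    show "girth_at_least (V \<times> Pow E) (coverE E) (2 * g)" using cover_girth gi sg by blast
    show "A \<times> Pow E \<union> B \<times> Pow E = V \<times> Pow E" using AB by auto
    show "A \<times> Pow E \<inter> B \<times> Pow E = {}" using AB by auto
    show "card (A \<times> Pow E) > 0" using cA' cA by simp
    show "t * card (A \<times> Pow E) \<le> card (B \<times> Pow E)" unfolding cA' cB' using cB
      by (metis mult.assoc mult_le_mono1)
    show "simple_graph (V \<times> Pow E) (coverE E)" by (rule sg')
    show "\<forall>e\<in>coverE E. \<exists>a\<in>A \<times> Pow E. \<exists>b\<in>B \<times> Pow E. e = {a,b}" by (rule bip')
    show "\<forall>v\<in>B \<times> Pow E. degree (coverE E) v \<ge> d" by (rule deg')
  qed
qed

lemma transfer_good: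
  assumes G: "good d t g V E A B" and f: "inj_on f V"
  shows "good d t g (f ` V) ((`) f ` E) (f ` A) (f ` B)"
proof -
  have sg: "simple_graph V E" and gi: "girth_at_least V E g" and AB: "A \<union> B = V" "A \<inter> B = {}"
    and cA: "card A > 0" and cB: "card B \<ge> t * card A"
    and bip: "\<forall>e\<in>E. \<exists>a\<in>A. \<exists>b\<in>B. e = {a,b}" and deg: "\<forall>v\<in>B. degree E v \<ge> d"
    using G unfolding good_def by auto
  have EV: "\<And>e. e \<in> E \<Longrightarrow> e \<subseteq> V" using sg unfolding simple_graph_def by auto
  have fA: "card (f ` A) = card A" "card (f ` B) = card B"
    using AB f by (auto intro!: card_image inj_on_subset[OF f])
  have sg': "simple_graph (f ` V) ((`) f ` E)"
    unfolding simple_graph_def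
  proof (intro conjI ballI)
    show "finite (f ` V)" using sg unfolding simple_graph_def by auto
    fix e' assume "e' \<in> (`) f ` E"
    then obtain e where e: "e \<in> E" "e' = f ` e" by auto
    show "e' \<subseteq> f ` V" using e EV by auto
    have "card (f ` e) = card e" using inj_on_subset[OF f EV[OF e(1)]] by (rule card_image)
    then show "card e' = 2" using e sg unfolding simple_graph_def by auto
  qed
  have gi': "girth_at_least (f ` V) ((`) f ` E) g"
    unfolding girth_at_least_def
  proof (intro allI impI)
    fix cs assume c: "is_cycle (f ` V) ((`) f ` E) cs"
    define h where "h = inv_into V f"
    have hV: "x \<in> f ` V \<Longrightarrow> h x \<in> V \<and> f (h x) = x" for x
      unfolding h_def by (auto simp: inv_into_into f_inv_into_f)
    have "is_cycle V E (map h cs)"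
      unfolding is_cycle_def
    proof (intro conjI allI impI)
      show "3 \<le> length (map h cs)" using c unfolding is_cycle_def by simp
      show "distinct (map h cs)" using c inj_on_subset[OF inj_on_inv_into[of "f ` V" f V]]
        unfolding is_cycle_def h_def by (auto simp: distinct_map)
      show "set (map h cs) \<subseteq> V" using c hV unfolding is_cycle_def by auto
      fix i assume i: "i < length (map h cs)"
      let ?j = "(i + 1) mod length cs"
      have j: "?j < length cs" using i by (metis length_map mod_less_divisor gr_implies_not0 neq0_conv)
      have "{cs ! i, cs ! ?j} \<in> (`) f ` E" using c i unfolding is_cycle_def by auto
      then obtain e where e: "e \<in> E" "{cs ! i, cs ! ?j} = f ` e" by auto
      have "h ` {cs ! i, cs ! ?j} = e" unfolding e(2) h_def using f EV[OF e(1)] by simp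
      then show "{map h cs ! i, map h cs ! ((i + 1) mod length (map h cs))} \<in> E"
        using e i j by simp
    qed
    then show "g \<le> length cs" using gi unfolding girth_at_least_def by fastforce
  qed
  have deg': "\<forall>v\<in>f ` B. degree ((`) f ` E) v \<ge> d"
  proof
    fix v assume "v \<in> f ` B"
    then obtain b where b: "b \<in> B" "v = f b" by auto
    have bV: "b \<in> V" using b AB by auto
    have "{e'\<in>(`) f ` E. v \<in> e'} = (`) f ` {e\<in>E. b \<in> e}"
    proof (intro equalityI subsetI)
      fix e' assume "e' \<in> {e'\<in>(`) f ` E. v \<in> e'}"
      then obtain e where e: "e \<in> E" "e' = f ` e" "f b \<in> f ` e" using b by auto
      then have "b \<in> e" using inj_on_image_mem_iff[OF f bV EV[OF e(1)]] by simp
      then show "e' \<in> (`) f ` {e\<in>E. b \<in> e}" using e by auto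
    qed (use b in auto)
    moreover have "inj_on ((`) f) {e\<in>E. b \<in> e}"
    proof -
      have "\<Union>{e\<in>E. b \<in> e} \<subseteq> V" using EV by auto
      then show ?thesis by (rule inj_on_image[OF inj_on_subset[OF f]])
    qed
    ultimately have "degree ((`) f ` E) v = degree E b" unfolding degree_def by (simp add: card_image)
    then show "degree ((`) f ` E) v \<ge> d" using deg b by simp
  qed
  show ?thesis unfolding good_def
  proof (intro conjI)
    show "f ` A \<union> f ` B = f ` V" using AB by auto
    show "f ` A \<inter> f ` B = {}" using AB f by (metis image_empty inj_on_image_Int sup.cobounded1 sup.cobounded2)
    show "\<forall>e\<in>(`) f ` E. \<exists>a\<in>f ` A. \<exists>b\<in>f ` B. e = {a, b}" using bip by fastforce
  qed (use sg' gi' deg' fA cA cB in auto)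
qed

lemma base_good:
  fixes d t :: nat assumes "d \<ge> 1"
  shows "\<exists>(V::nat set) E A B. good d t 1 V E A B"
proof -
  define A where "A = {0..<d}"
  define B where "B = {d..<d+t*d}"
  define E where "E = {{a,b} | a b. a \<in> A \<and> b \<in> B}"
  have sg: "simple_graph (A \<union> B) E" unfolding simple_graph_def
  proof (intro conjI ballI)
    show "finite (A \<union> B)" unfolding A_def B_def by simp
    fix e assume "e \<in> E"
    then obtain a b where ab: "e = {a,b}" "a \<in> A" "b \<in> B" unfolding E_def by blast
    then have "a \<noteq> b" unfolding A_def B_def by auto
    then show "card e = 2" "e \<subseteq> A \<union> B" using ab by auto
  qed
  have gi: "girth_at_least (A \<union> B) E 1" unfolding girth_at_least_def is_cycle_def by auto
  have deg: "\<forall>v\<in>B. degree E v \<ge> d"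
  proof
    fix b assume b: "b \<in> B"
    have "(\<lambda>a. {a,b}) ` A \<subseteq> {e\<in>E. b \<in> e}" using b unfolding E_def by auto
    moreover have "inj_on (\<lambda>a. {a,b}) A" using b unfolding inj_on_def A_def B_def
      by (auto simp: doubleton_eq_iff)
    moreover have "finite {e\<in>E. b \<in> e}"
    proof -
      have "{e\<in>E. b \<in> e} \<subseteq> Pow (A \<union> B)" unfolding E_def by auto
      moreover have "finite (Pow (A \<union> B))" unfolding A_def B_def by simp
      ultimately show ?thesis by (rule finite_subset)
    qed
    ultimately have "card A \<le> card {e\<in>E. b \<in> e}" by (metis card_image card_mono)
    then show "degree E b \<ge> d" unfolding degree_def A_def by simp
  qed
  have "good d t 1 (A \<union> B) E A B" unfolding good_def
  proof (intro conjI)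
    show "A \<inter> B = {}" unfolding A_def B_def by auto
    show "card A > 0" unfolding A_def using assms by simp
    show "t * card A \<le> card B" unfolding A_def B_def by simp
    show "\<forall>e\<in>E. \<exists>a\<in>A. \<exists>b\<in>B. e = {a, b}" unfolding E_def by auto
    show "simple_graph (A \<union> B) E" by (rule sg)
    show "girth_at_least (A \<union> B) E 1" by (rule gi)
    show "\<forall>v\<in>B. degree E v \<ge> d" by (rule deg)
  qed simp
  then show ?thesis by blast
qed

lemma all_good:
  fixes d t :: nat assumes "d \<ge> 1"
  shows "\<exists>(V::nat set) E A B. good d t (2^k) V E A B"
proof (induction k)
  case 0 then show ?case using base_good[OF assms] by simp
next
  case (Suc k)
  then obtain V :: "nat set" and E A B where G: "good d t (2^k) V E A B" by blast
  have G': "good d t (2^Suc k) (V \<times> Pow E) (coverE E) (A \<times> Pow E) (B \<times> Pow E)"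
    using cover_good[OF G] by simp
  have "simple_graph (V \<times> Pow E) (coverE E)" using G' unfolding good_def by (rule conjunct1)
  then have "finite (V \<times> Pow E)" unfolding simple_graph_def by (rule conjunct1)
  then obtain f :: "nat \<times> nat set set \<Rightarrow> nat" and n where "inj_on f (V \<times> Pow E)"
    using finite_imp_inj_to_nat_seg by blast
  from transfer_good[OF G' this] show ?case by blast
qed

lemma girth_mono: "girth_at_least V E g \<Longrightarrow> g' \<le> g \<Longrightarrow> girth_at_least V E g'"
  unfolding girth_at_least_def by force

theorem lemma5p10:
  fixes d g t :: nat
  assumes "d \<ge> 2" and "g \<ge> 1" and "t \<ge> 4"
  shows "\<exists>(m::nat) (n::nat) (V::nat set) (E::nat set set) A B.
           m > 0 \<and> n > 0 \<and> n \<ge> t * m \<and>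
           simple_graph V E \<and> girth_at_least V E g \<and>
           A \<union> B = V \<and> A \<inter> B = {} \<and> card A = m \<and> card B = n \<and>
           (\<forall>e\<in>E. \<exists>a\<in>A. \<exists>b\<in>B. e = {a, b}) \<and>
           (\<forall>v\<in>B. degree E v \<ge> d)"
proof -
  obtain V :: "nat set" and E A B where G: "good d t (2^g) V E A B"
    using all_good[of d t g] assms by auto
  have "g \<le> 2^g" by (rule less_imp_le[OF less_exp])
  have sg: "simple_graph V E" and gi0: "girth_at_least V E (2^g)" and AB: "A \<union> B = V" "A \<inter> B = {}"
    and cA: "card A > 0" and cB: "card B \<ge> t * card A"
    and bip: "\<forall>e\<in>E. \<exists>a\<in>A. \<exists>b\<in>B. e = {a,b}" and deg: "\<forall>v\<in>B. degree E v \<ge> d"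
    using G unfolding good_def by auto
  have gi: "girth_at_least V E g" using girth_mono[OF gi0 \<open>g \<le> 2^g\<close>] .
  have "t * card A > 0" using cA assms by simp
  then have pos: "card B > 0" using cB by linarith
  show ?thesis
    apply (rule exI[of _ "card A"], rule exI[of _ "card B"], rule exI[of _ V], rule exI[of _ E],
           rule exI[of _ A], rule exI[of _ B])
    using cA pos cB sg gi AB bip deg by simp
qed

end
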